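(* Every nonempty sibling $\sigma_d$-invariant lamination $\mathcal L$ contains a chief, i.e. a sublamination which is a nonempty sibling $\sigma_d$-invariant lamination minimal by inclusion among such.
   Context: $\mathbb S$ is the unit circle, $\sigma_d(z)=z^d$, $d\ge2$. A chord $\overline{ab}$ joins $a,b\in\mathbb S$; distinct chords cross if they meet in the open unit disk; a chord is critical if $a\ne b$ and $\sigma_d(a)=\sigma_d(b)$. A lamination is a family of pairwise non-crossing chords (leaves) containing all points of $\mathbb S$, whose union is closed; it is sibling $\sigma_d$-invariant if (1) images of leaves are leaves; (2) every leaf is the image of a leaf; (3) every non-critical leaf $\ell$ belongs to $d$ pairwise disjoint leaves $\ell_1=\ell,\dots,\ell_d$ with equal images. Nonempty means having a nondegenerate leaf. *)

theory Defs
  imports "HOL-Analysis.Analysis"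
begin

text \<open>A chord is represented by its set of endpoints {a,b} with a, b on the unit
circle (a = b gives a degenerate chord, i.e. a point of the circle).\<close>

definition sigma :: "nat \<Rightarrow> complex \<Rightarrow> complex" where
  "sigma d z = z ^ d"

definition is_chord :: "complex set \<Rightarrow> bool" where
  "is_chord c \<longleftrightarrow> (\<exists>a b. a \<in> sphere 0 1 \<and> b \<in> sphere 0 1 \<and> c = {a, b})"

definition seg :: "complex set \<Rightarrow> complex set" where
  "seg c = convex hull c"

definition crosses :: "complex set \<Rightarrow> complex set \<Rightarrow> bool" where
  "crosses c1 c2 \<longleftrightarrow> c1 \<noteq> c2 \<and> seg c1 \<inter> seg c2 \<inter> ball 0 1 \<noteq> {}"

definition critical :: "nat \<Rightarrow> complex set \<Rightarrow> bool" where
  "critical d c \<longleftrightarrow> (\<exists>a b. c = {a, b} \<and> a \<noteq> b \<and> sigma d a = sigma d b)"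

definition lamination :: "complex set set \<Rightarrow> bool" where
  "lamination L \<longleftrightarrow>
     (\<forall>l\<in>L. is_chord l) \<and>
     (\<forall>l1\<in>L. \<forall>l2\<in>L. \<not> crosses l1 l2) \<and>
     (\<forall>z\<in>sphere 0 1. {z} \<in> L) \<and>
     closed (\<Union>l\<in>L. seg l)"

definition sibling_invariant :: "nat \<Rightarrow> complex set set \<Rightarrow> bool" where
  "sibling_invariant d L \<longleftrightarrow>
     (\<forall>l\<in>L. sigma d ` l \<in> L) \<and>
     (\<forall>l\<in>L. \<exists>l'\<in>L. sigma d ` l' = l) \<and>
     (\<forall>l\<in>L. \<not> critical d l \<longrightarrow>
        (\<exists>f :: nat \<Rightarrow> complex set. f 1 = l \<and>
           (\<forall>i\<in>{1..d}. f i \<in> L \<and> sigma d ` (f i) = sigma d ` l) \<and>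
           (\<forall>i\<in>{1..d}. \<forall>j\<in>{1..d}. i \<noteq> j \<longrightarrow> seg (f i) \<inter> seg (f j) = {})))"

definition nonempty_lam :: "complex set set \<Rightarrow> bool" where
  "nonempty_lam L \<longleftrightarrow> (\<exists>l\<in>L. card l = 2)"

definition good_lam :: "nat \<Rightarrow> complex set set \<Rightarrow> bool" where
  "good_lam d L \<longleftrightarrow> lamination L \<and> sibling_invariant d L \<and> nonempty_lam L"

definition is_chief :: "nat \<Rightarrow> complex set set \<Rightarrow> complex set set \<Rightarrow> bool" where
  "is_chief d L C \<longleftrightarrow> C \<subseteq> L \<and> good_lam d C \<and>
     (\<forall>C'. C' \<subseteq> C \<and> good_lam d C' \<longrightarrow> C' = C)"

end

theory Submission
  imports Defs
begin

lemma seg_sub_cball: "is_chord l \<Longrightarrow> seg l \<subseteq> cball 0 1"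
proof -
  assume "is_chord l"
  then obtain a b where "a \<in> sphere 0 1" "b \<in> sphere 0 1" "l = {a,b}" unfolding is_chord_def by blast
  then have "l \<subseteq> cball 0 1" by auto
  then show ?thesis unfolding seg_def by (simp add: hull_minimal convex_cball)
qed

lemma seg_single: "seg {z} = {z}"
  by (simp add: seg_def)

lemma unique_leaf:
  assumes "lamination C" "l1 \<in> C" "l2 \<in> C" "p \<in> seg l1" "p \<in> seg l2" "norm p < 1"
  shows "l1 = l2"
proof (rule ccontr)
  assume "l1 \<noteq> l2"
  have "p \<in> seg l1 \<inter> seg l2 \<inter> ball 0 1" using assms by simp
  then have "crosses l1 l2" using \<open>l1 \<noteq> l2\<close> unfolding crosses_def by blast
  then show False using assms(1-3) unfolding lamination_def by blast
qed

lemma chain_common: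
  assumes "K \<noteq> {}" "\<forall>C1\<in>K. \<forall>C2\<in>K. C1 \<subseteq> C2 \<or> C2 \<subseteq> C1"
    "\<forall>C\<in>K. F C \<noteq> {} \<and> F C \<subseteq> S" "finite S"
    "\<And>C1 C2. C1\<in>K \<Longrightarrow> C2\<in>K \<Longrightarrow> C1 \<subseteq> C2 \<Longrightarrow> F C1 \<subseteq> F C2"
  shows "\<exists>x. \<forall>C\<in>K. x \<in> F C"
proof -
  obtain k where "k \<in> K" using assms(1) by blast
  have "\<exists>x. x \<in> K \<and> (\<forall>y. y \<in> K \<longrightarrow> card (F x) \<le> card (F y))"
    by (rule ex_has_least_nat[of "\<lambda>C. C \<in> K" k], fact)
  then obtain C0 where C0: "C0 \<in> K" "\<And>C. C \<in> K \<Longrightarrow> card (F C0) \<le> card (F C)" by blast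
  have "F C0 \<noteq> {}" using assms(3) C0(1) by blast
  then obtain x where x: "x \<in> F C0" by blast
  have "x \<in> F C" if "C \<in> K" for C
  proof (cases "C0 \<subseteq> C")
    case True then show ?thesis using assms(5)[OF C0(1) that] x by blast
  next
    case False
    then have "C \<subseteq> C0" using assms(2) that C0(1) by blast
    then have sub: "F C \<subseteq> F C0" using assms(5)[OF that C0(1)] by blast
    have fin: "finite (F C0)" using assms(3,4) C0(1) finite_subset by blast
    have "card (F C0) \<le> card (F C)" using C0(2) that by blast
    moreover have "card (F C) \<le> card (F C0)" by (rule card_mono[OF fin sub])
    ultimately have "F C = F C0" by (intro card_subset_eq[OF fin sub]) simp
    then show ?thesis using x by simp
  qed
  then show ?thesis by blast
qed

lemma pow_lip:
  fixes x y :: complex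
  assumes "norm x = 1" "norm y = 1"
  shows "norm (x^n - y^n) \<le> n * norm (x - y)"
proof -
  have e: "norm (x^n - y^n) = norm (x - y) * norm (\<Sum>i<n. y^(n - Suc i) * x^i)"
    by (simp add: power_diff_sumr2 norm_mult)
  have "norm (\<Sum>i<n. y^(n - Suc i) * x^i) \<le> (\<Sum>i<n. norm (y^(n - Suc i) * x^i))"
    by (rule norm_sum)
  also have "\<dots> = n" using assms by (simp add: norm_mult norm_power)
  finally have "norm (\<Sum>i<n. y^(n - Suc i) * x^i) \<le> n" .
  then have "norm (x - y) * norm (\<Sum>i<n. y^(n - Suc i) * x^i) \<le> norm (x - y) * n"
    by (intro mult_left_mono) auto
  then show ?thesis unfolding e by (simp add: mult.commute)
qed

lemma pow_expand:
  fixes a b :: complex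
  assumes "norm a = 1" "norm b = 1" "d \<ge> 2" "norm (a - b) \<le> 1 / (2 * d^2)"
  shows "norm (a^d - b^d) \<ge> 3/2 * norm (a - b)"
proof -
  define S where "S = (\<Sum>i<d. b^(d - Suc i) * a^i)"
  have eq: "a^d - b^d = (a - b) * S" unfolding S_def by (simp add: power_diff_sumr2)
  have "norm (S - of_nat d * a^(d-1)) = norm (\<Sum>i<d. b^(d - Suc i) * a^i - a^(d - Suc i) * a^i)"
  proof -
    have "(\<Sum>i<d. a^(d - Suc i) * a^i) = (\<Sum>i<(d::nat). a^(d-1))"
      by (intro sum.cong refl) (simp add: power_add[symmetric])
    then show ?thesis unfolding S_def by (simp add: sum_subtractf)
  qed
  also have "\<dots> \<le> (\<Sum>i<d. norm (b^(d - Suc i) * a^i - a^(d - Suc i) * a^i))"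
    by (rule norm_sum)
  also have "\<dots> = (\<Sum>i<d. norm (b^(d - Suc i) - a^(d - Suc i)))"
    using assms(1) by (simp add: left_diff_distrib[symmetric] norm_mult norm_power)
  also have "\<dots> \<le> (\<Sum>i<d. real d * norm (a - b))"
  proof (rule sum_mono)
    fix i assume "i \<in> {..<d}"
    have "norm (b^(d - Suc i) - a^(d - Suc i)) \<le> real (d - Suc i) * norm (b - a)"
      using pow_lip[OF assms(2,1)] by blast
    also have "\<dots> \<le> real d * norm (a - b)" by (simp add: norm_minus_commute mult_right_mono)
    finally show "norm (b^(d - Suc i) - a^(d - Suc i)) \<le> real d * norm (a - b)" .
  qed
  also have "\<dots> = real d ^2 * norm (a - b)" by (simp add: power2_eq_square)
  also have "\<dots> \<le> real d^2 * (1 / (2 * d^2))" using assms(4) by (intro mult_left_mono) auto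
  also have "\<dots> = 1/2" using assms(3) by simp
  finally have h: "norm (S - of_nat d * a^(d-1)) \<le> 1/2" .
  have "norm (of_nat d * a^(d-1)) = d" using assms(1) by (simp add: norm_mult norm_power)
  then have "norm S \<ge> d - 1/2" using h norm_triangle_ineq2[of "of_nat d * a^(d-1)" S]
    by (simp add: norm_minus_commute)
  then have "norm S \<ge> 3/2" using assms(3) by simp
  then have "3/2 * norm (a - b) \<le> norm S * norm (a - b)"
    by (intro mult_right_mono) auto
  then show ?thesis unfolding eq norm_mult by (simp add: mult.commute)
qed

lemma chord_pts: "is_chord l \<Longrightarrow> z \<in> l \<Longrightarrow> norm z = 1"
  unfolding is_chord_def by auto

lemma long_leaf:
  assumes d: "d \<ge> 2" and g: "good_lam d C"
  shows "\<exists>a b. {a,b} \<in> C \<and> norm a = 1 \<and> norm b = 1 \<and> norm (a - b) \<ge> 1 / (2 * d^2)"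
proof (rule ccontr)
  assume na: "\<not> ?thesis"
  define \<delta> :: real where "\<delta> = 1 / (2 * d^2)"
  have small: "norm (a - b) < \<delta>" if "{a,b} \<in> C" "norm a = 1" "norm b = 1" for a b
    using na that unfolding \<delta>_def by force
  define S where "S = {norm (a - b) | a b. {a,b} \<in> C \<and> a \<noteq> b \<and> norm a = 1 \<and> norm b = 1}"
  have lam: "lamination C" and si: "sibling_invariant d C" and ne: "nonempty_lam C"
    using g unfolding good_lam_def by auto
  obtain l where l: "l \<in> C" "card l = 2" using ne unfolding nonempty_lam_def by blast
  then obtain a0 b0 where ab0: "l = {a0, b0}" "a0 \<noteq> b0" by (meson card_2_iff)
  have ch: "is_chord l" using lam l unfolding lamination_def by blast
  have "norm a0 = 1" "norm b0 = 1" using chord_pts[OF ch] ab0 by auto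
  then have x0: "norm (a0 - b0) \<in> S" unfolding S_def using l ab0 by blast
  have Sne: "S \<noteq> {}" using x0 by blast
  have bdd: "bdd_above S" unfolding S_def bdd_above_def using small
    by (intro exI[of _ \<delta>]) (auto intro: less_imp_le)
  have pos0: "norm (a0 - b0) > 0" using ab0 by simp
  have spos: "Sup S > 0" using cSup_upper[OF x0 bdd] pos0 by linarith
  have "2/3 * Sup S < Sup S" using spos by simp
  then obtain x where x: "x \<in> S" "2/3 * Sup S < x" using less_cSup_iff[OF Sne bdd] by blast
  then obtain a b where ab: "x = norm (a - b)" "{a,b} \<in> C" "a \<noteq> b" "norm a = 1" "norm b = 1"
    unfolding S_def by blast
  have "x < \<delta>" using small ab by blast
  then have "norm (a^d - b^d) \<ge> 3/2 * x" using pow_expand[OF ab(4,5) d] ab(1) unfolding \<delta>_def by simp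
  then have gt: "norm (a^d - b^d) > Sup S" using x(2) by linarith
  have img: "{a^d, b^d} \<in> C"
  proof -
    have "\<forall>l\<in>C. sigma d ` l \<in> C" using si unfolding sibling_invariant_def by (rule conjunct1)
    then have "sigma d ` {a,b} \<in> C" using ab(2) by blast
    then show ?thesis by (simp add: sigma_def)
  qed
  have "a^d \<noteq> b^d" using gt spos by auto
  moreover have "norm (a^d) = 1" "norm (b^d) = 1" using ab by (simp_all add: norm_power)
  ultimately have "norm (a^d - b^d) \<in> S" unfolding S_def using img by blast
  then have "norm (a^d - b^d) \<le> Sup S" using cSup_upper[OF _ bdd] by blast
  then show False using gt by linarith
qed

lemma midpoint_close:
  fixes a b :: complex
  assumes "norm a = 1" "norm b = 1"
  shows "norm (midpoint a b) ^ 2 = 1 - norm (a - b) ^ 2 / 4"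
proof -
  have h1: "2 * inner a b = norm (a + b)^2 - norm a^2 - norm b^2" using dot_norm[of a b] by simp
  have h2: "2 * inner a b = norm a^2 + norm b^2 - norm (a - b)^2" using dot_norm_neg[of a b] by simp
  have n: "norm a^2 = 1" "norm b^2 = 1" using assms by simp_all
  have e: "norm (a + b)^2 = 4 - norm (a - b)^2"
    using h1 h2 n by linarith
  have m: "midpoint a b = (a + b) / 2"
    unfolding midpoint_def scaleR_conv_of_real by simp
  have "norm (midpoint a b) ^ 2 = norm (a + b) ^ 2 / 4"
    unfolding m norm_divide by (simp add: power_divide)
  then show ?thesis using e by simp
qed

lemma si_img: "sibling_invariant d C \<Longrightarrow> l \<in> C \<Longrightarrow> sigma d ` l \<in> C"
  unfolding sibling_invariant_def by (drule conjunct1) (erule bspec)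
lemma si_pre: "sibling_invariant d C \<Longrightarrow> l \<in> C \<Longrightarrow> \<exists>l'\<in>C. sigma d ` l' = l"
  unfolding sibling_invariant_def by (drule conjunct2, drule conjunct1) (erule bspec)
lemma si_sib: "sibling_invariant d C \<Longrightarrow> l \<in> C \<Longrightarrow> \<not> critical d l \<Longrightarrow>
   (\<exists>f :: nat \<Rightarrow> complex set. f 1 = l \<and>
           (\<forall>i\<in>{1..d}. f i \<in> C \<and> sigma d ` (f i) = sigma d ` l) \<and>
           (\<forall>i\<in>{1..d}. \<forall>j\<in>{1..d}. i \<noteq> j \<longrightarrow> seg (f i) \<inter> seg (f j) = {}))"
  unfolding sibling_invariant_def by (drule conjunct2, drule conjunct2, drule bspec, assumption) (erule mp)

lemma common_leaf:
  assumes lam: "\<forall>C\<in>K. lamination C" and ch: "\<forall>C1\<in>K. \<forall>C2\<in>K. C1 \<subseteq> C2 \<or> C2 \<subseteq> C1"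
    and C0: "C0 \<in> K" and p: "norm p < 1" and ex: "\<forall>C\<in>K. \<exists>l\<in>C. p \<in> seg l"
  shows "\<exists>l\<in>\<Inter>K. p \<in> seg l"
proof -
  obtain l0 where l0: "l0 \<in> C0" "p \<in> seg l0" using ex C0 by blast
  have "l0 \<in> C" if C: "C \<in> K" for C
  proof (cases "C0 \<subseteq> C")
    case True then show ?thesis using l0 by blast
  next
    case False
    then have sub: "C \<subseteq> C0" using ch C C0 by blast
    obtain lC where lC: "lC \<in> C" "p \<in> seg lC" using ex C by blast
    have "lC = l0" using unique_leaf[of C0 lC l0 p] lam C0 sub lC l0 p by blast
    then show ?thesis using lC by simp
  qed
  then show ?thesis using l0 by blast
qed

lemma finite_pre:
  assumes "finite A" "d \<ge> 2"
  shows "finite {z. sigma d z \<in> A}"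
proof -
  have "{z. sigma d z \<in> A} = (\<Union>w\<in>A. {z. z ^ d = w})" by (auto simp: sigma_def)
  moreover have "finite (\<Union>w\<in>A. {z::complex. z ^ d = w})"
    using assms by (intro finite_UN_I) (auto intro!: finite_nth_roots)
  ultimately show ?thesis by simp
qed

lemma chord_finite: "is_chord l \<Longrightarrow> finite l"
  unfolding is_chord_def by auto

lemma chain_good:
  assumes d: "d \<ge> 2" and Kne: "K \<noteq> {}"
    and ch: "\<forall>C1\<in>K. \<forall>C2\<in>K. C1 \<subseteq> C2 \<or> C2 \<subseteq> C1"
    and g: "\<forall>C\<in>K. good_lam d C"
  shows "good_lam d (\<Inter>K)"
proof -
  obtain C0 where C0: "C0 \<in> K" using Kne by blast
  have lam: "\<forall>C\<in>K. lamination C" using g unfolding good_lam_def by blast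
  have si: "\<forall>C\<in>K. sibling_invariant d C" using g unfolding good_lam_def by blast
  have lamC0: "lamination C0" using lam C0 by blast
  have sub0: "\<Inter>K \<subseteq> C0" using C0 by blast
  have chords: "\<forall>l\<in>\<Inter>K. is_chord l" using lamC0 sub0 unfolding lamination_def by blast
  have ncr: "\<forall>l1\<in>\<Inter>K. \<forall>l2\<in>\<Inter>K. \<not> crosses l1 l2" using lamC0 sub0 unfolding lamination_def by blast
  have pts: "\<forall>z\<in>sphere 0 1. {z} \<in> \<Inter>K"
  proof (intro ballI InterI)
    fix z :: complex and C assume "z \<in> sphere 0 1" "C \<in> K"
    then show "{z} \<in> C" using lam unfolding lamination_def by blast
  qed
  have closedC: "closed (\<Union>l\<in>C. seg l)" if "C \<in> K" for C
    using lam that unfolding lamination_def by blast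
  have cl: "closed (\<Union>l\<in>\<Inter>K. seg l)"
  proof -
    have "closure (\<Union>l\<in>\<Inter>K. seg l) \<subseteq> (\<Union>l\<in>\<Inter>K. seg l)"
    proof
      fix p assume p: "p \<in> closure (\<Union>l\<in>\<Inter>K. seg l)"
      have inC: "\<forall>C\<in>K. \<exists>l\<in>C. p \<in> seg l"
      proof
        fix C assume C: "C \<in> K"
        have "(\<Union>l\<in>\<Inter>K. seg l) \<subseteq> (\<Union>l\<in>C. seg l)" using C by blast
        then have "closure (\<Union>l\<in>\<Inter>K. seg l) \<subseteq> (\<Union>l\<in>C. seg l)"
          using closedC[OF C] by (rule closure_minimal)
        then show "\<exists>l\<in>C. p \<in> seg l" using p by blast
      qed
      then obtain l where l: "l \<in> C0" "p \<in> seg l" using C0 by blast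
      have "is_chord l" using lamC0 l unfolding lamination_def by blast
      then have "norm p \<le> 1" using seg_sub_cball l by fastforce
      show "p \<in> (\<Union>l\<in>\<Inter>K. seg l)"
      proof (cases "norm p = 1")
        case True
        then have "{p} \<in> \<Inter>K" using pts by simp
        then show ?thesis using seg_single[of p] by blast
      next
        case False
        then have "norm p < 1" using \<open>norm p \<le> 1\<close> by simp
        then show ?thesis using common_leaf[OF lam ch C0 _ inC] by blast
      qed
    qed
    then show ?thesis using closure_subset_eq by blast
  qed
  have lamM: "lamination (\<Inter>K)" unfolding lamination_def using chords ncr pts cl by blast
  have img: "\<forall>l\<in>\<Inter>K. sigma d ` l \<in> \<Inter>K"
    using si si_img by blast
  have pre: "\<forall>l\<in>\<Inter>K. \<exists>l'\<in>\<Inter>K. sigma d ` l' = l"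
  proof
    fix l assume l: "l \<in> \<Inter>K"
    have "finite l" using chords l chord_finite by blast
    then have fR: "finite {z. sigma d z \<in> l}" using finite_pre d by blast
    have "\<exists>x. \<forall>C\<in>K. x \<in> {l'\<in>C. sigma d ` l' = l}"
    proof (rule chain_common[OF Kne ch _ finite_Pow_iff[THEN iffD2, OF fR]])
      show "\<forall>C\<in>K. {l'\<in>C. sigma d ` l' = l} \<noteq> {} \<and> {l'\<in>C. sigma d ` l' = l} \<subseteq> Pow {z. sigma d z \<in> l}"
      proof
        fix C assume C: "C \<in> K"
        have "l \<in> C" using l C by blast
        then have "{l'\<in>C. sigma d ` l' = l} \<noteq> {}" using si_pre si C by blast
        moreover have "{l'\<in>C. sigma d ` l' = l} \<subseteq> Pow {z. sigma d z \<in> l}" by blast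
        ultimately show "{l'\<in>C. sigma d ` l' = l} \<noteq> {} \<and> {l'\<in>C. sigma d ` l' = l} \<subseteq> Pow {z. sigma d z \<in> l}" by blast
      qed
    next
      fix C1 C2 assume "C1 \<in> K" "C2 \<in> K" "C1 \<subseteq> C2"
      then show "{l'\<in>C1. sigma d ` l' = l} \<subseteq> {l'\<in>C2. sigma d ` l' = l}" by blast
    qed
    then obtain x where x: "\<forall>C\<in>K. x \<in> {l'\<in>C. sigma d ` l' = l}" by blast
    then have "x \<in> \<Inter>K" by blast
    moreover have "sigma d ` x = l" using x C0 by blast
    ultimately show "\<exists>l'\<in>\<Inter>K. sigma d ` l' = l" by blast
  qed
  have sib: "\<forall>l\<in>\<Inter>K. \<not> critical d l \<longrightarrow>
        (\<exists>f :: nat \<Rightarrow> complex set. f 1 = l \<and>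
           (\<forall>i\<in>{1..d}. f i \<in> \<Inter>K \<and> sigma d ` (f i) = sigma d ` l) \<and>
           (\<forall>i\<in>{1..d}. \<forall>j\<in>{1..d}. i \<noteq> j \<longrightarrow> seg (f i) \<inter> seg (f j) = {}))"
  proof (intro ballI impI)
    fix l assume l: "l \<in> \<Inter>K" and nc: "\<not> critical d l"
    have "finite l" using chords l chord_finite by blast
    then have fR: "finite {z. sigma d z \<in> sigma d ` l}" using finite_pre d by blast
    define R where "R = {z. sigma d z \<in> sigma d ` l}"
    define G where "G = {g \<in> PiE {1..d} (\<lambda>_. Pow R). g 1 = l \<and>
           (\<forall>i\<in>{1..d}. sigma d ` (g i) = sigma d ` l) \<and>
           (\<forall>i\<in>{1..d}. \<forall>j\<in>{1..d}. i \<noteq> j \<longrightarrow> seg (g i) \<inter> seg (g j) = {})}"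
    define F where "F = (\<lambda>C. {g \<in> G. \<forall>i\<in>{1..d}. g i \<in> C})"
    have fP: "finite (PiE {1..d} (\<lambda>_. Pow R))"
      using fR unfolding R_def by (intro finite_PiE) auto
    have fS: "finite G" unfolding G_def by (rule finite_subset[OF Collect_restrict fP])
    have "\<exists>x. \<forall>C\<in>K. x \<in> F C"
    proof (rule chain_common[OF Kne ch _ fS])
      show "\<forall>C\<in>K. F C \<noteq> {} \<and> F C \<subseteq> G"
      proof
        fix C assume C: "C \<in> K"
        have "l \<in> C" using l C by blast
        have siC: "sibling_invariant d C" using si C by blast
        obtain f where f0: "f 1 = l \<and>
           (\<forall>i\<in>{1..d}. f i \<in> C \<and> sigma d ` (f i) = sigma d ` l) \<and>
           (\<forall>i\<in>{1..d}. \<forall>j\<in>{1..d}. i \<noteq> j \<longrightarrow> seg (f i) \<inter> seg (f j) = {})"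
          using si_sib[OF siC \<open>l \<in> C\<close> nc] by (rule exE)
        note f = conjunct1[OF f0] conjunct1[OF conjunct2[OF f0]] conjunct2[OF conjunct2[OF f0]]
        have A: "restrict f {1..d} \<in> PiE {1..d} (\<lambda>_. Pow R)"
          unfolding restrict_PiE_iff
        proof
          fix i assume i: "i \<in> {1..d}"
          have eq: "sigma d ` f i = sigma d ` l" using bspec[OF f(2) i] by (rule conjunct2)
          show "f i \<in> Pow R" unfolding R_def
          proof (rule PowI, rule subsetI, rule CollectI)
            fix z assume "z \<in> f i"
            then have "sigma d z \<in> sigma d ` f i" by (rule imageI)
            then show "sigma d z \<in> sigma d ` l" unfolding eq .
          qed
        qed
        have B: "restrict f {1..d} 1 = l" using f(1) d by simp
        have C1: "\<forall>i\<in>{1..d}. restrict f {1..d} i \<in> C"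
        proof
          fix i assume i: "i \<in> {1..d}"
          show "restrict f {1..d} i \<in> C"
            unfolding restrict_apply'[OF i] using bspec[OF f(2) i] by (rule conjunct1)
        qed
        have C2: "\<forall>i\<in>{1..d}. sigma d ` (restrict f {1..d} i) = sigma d ` l"
        proof
          fix i assume i: "i \<in> {1..d}"
          show "sigma d ` (restrict f {1..d} i) = sigma d ` l"
            unfolding restrict_apply'[OF i] using bspec[OF f(2) i] by (rule conjunct2)
        qed
        have D: "\<forall>i\<in>{1..d}. \<forall>j\<in>{1..d}. i \<noteq> j \<longrightarrow> seg (restrict f {1..d} i) \<inter> seg (restrict f {1..d} j) = {}"
        proof (intro ballI)
          fix i j assume i: "i \<in> {1..d}" and j: "j \<in> {1..d}"
          show "i \<noteq> j \<longrightarrow> seg (restrict f {1..d} i) \<inter> seg (restrict f {1..d} j) = {}"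
            unfolding restrict_apply'[OF i] restrict_apply'[OF j] by (rule bspec[OF bspec[OF f(3) i] j])
        qed
        have inG: "restrict f {1..d} \<in> G"
          unfolding G_def mem_Collect_eq by (intro conjI A B C2 D)
        have "restrict f {1..d} \<in> F C"
          unfolding F_def mem_Collect_eq by (intro conjI inG C1)
        then have "F C \<noteq> {}" by blast
        moreover have "F C \<subseteq> G" unfolding F_def by (rule Collect_restrict)
        ultimately show "F C \<noteq> {} \<and> F C \<subseteq> G" by (rule conjI)
      qed
    next
      fix C1 C2 assume "C1 \<in> K" "C2 \<in> K" "C1 \<subseteq> C2"
      then show "F C1 \<subseteq> F C2" unfolding F_def by blast
    qed
    then obtain g where g: "\<forall>C\<in>K. g \<in> F C" by blast
    have gC: "\<forall>i\<in>{1..d}. g i \<in> C" if "C \<in> K" for C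
    proof -
      have "g \<in> G \<and> (\<forall>i\<in>{1..d}. g i \<in> C)" using bspec[OF g that] unfolding F_def by (rule CollectD)
      then show ?thesis by (rule conjunct2)
    qed
    have "g \<in> G \<and> (\<forall>i\<in>{1..d}. g i \<in> C0)" using bspec[OF g C0] unfolding F_def by (rule CollectD)
    then have gG: "g \<in> G" by (rule conjunct1)
    then have gp: "g \<in> PiE {1..d} (\<lambda>_. Pow R) \<and> g 1 = l \<and>
           (\<forall>i\<in>{1..d}. sigma d ` (g i) = sigma d ` l) \<and>
           (\<forall>i\<in>{1..d}. \<forall>j\<in>{1..d}. i \<noteq> j \<longrightarrow> seg (g i) \<inter> seg (g j) = {})"
      unfolding G_def by (rule CollectD)
    note gq = conjunct1[OF conjunct2[OF gp]] conjunct1[OF conjunct2[OF conjunct2[OF gp]]]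
      conjunct2[OF conjunct2[OF conjunct2[OF gp]]]
    have gK: "\<forall>i\<in>{1..d}. g i \<in> \<Inter>K \<and> sigma d ` (g i) = sigma d ` l"
    proof
      fix i assume i: "i \<in> {1..d}"
      have "g i \<in> \<Inter>K"
      proof
        fix C assume "C \<in> K"
        then show "g i \<in> C" using gC i by blast
      qed
      then show "g i \<in> \<Inter>K \<and> sigma d ` (g i) = sigma d ` l"
        using bspec[OF gq(2) i] by (rule conjI)
    qed
    show "\<exists>f :: nat \<Rightarrow> complex set. f 1 = l \<and>
           (\<forall>i\<in>{1..d}. f i \<in> \<Inter>K \<and> sigma d ` (f i) = sigma d ` l) \<and>
           (\<forall>i\<in>{1..d}. \<forall>j\<in>{1..d}. i \<noteq> j \<longrightarrow> seg (f i) \<inter> seg (f j) = {})"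
      by (intro exI[of _ g] conjI gq(1) gK gq(3))
  qed
  have siM: "sibling_invariant d (\<Inter>K)"
    unfolding sibling_invariant_def by (intro conjI img pre sib)
  have neM: "nonempty_lam (\<Inter>K)"
  proof -
    define \<delta> :: real where "\<delta> = 1 / (2 * (real d)^2)"
    have dpos: "\<delta> > 0" using d unfolding \<delta>_def by simp
    define r where "r = sqrt (1 - \<delta>^2 / 4)"
    have "\<delta>^2 > 0" using dpos by simp
    then have "1 - \<delta>^2 / 4 < 1" by simp
    then have r1: "r < 1" unfolding r_def by (simp only: real_sqrt_lt_1_iff)
    define T where "T = (\<lambda>C. (\<Union>l\<in>C. seg l) \<inter> cball 0 r)"
    have Tmono: "T C1 \<subseteq> T C2" if "C1 \<subseteq> C2" for C1 C2
      unfolding T_def using that by blast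
    have "\<Inter>(T ` K) \<noteq> {}"
    proof (rule compact_chain)
      fix S assume "S \<in> T ` K"
      then obtain C where C: "C \<in> K" "S = T C" by (rule imageE)
      show "compact S" unfolding C(2) T_def by (rule closed_Int_compact[OF closedC[OF C(1)] compact_cball])
    next
      show "{} \<notin> T ` K"
      proof
        assume "{} \<in> T ` K"
        then obtain C where C: "C \<in> K" "{} = T C" by (rule imageE)
        have gC: "good_lam d C" using g C(1) by (rule bspec)
        obtain a b where ab: "{a,b} \<in> C" "norm a = 1" "norm b = 1" "norm (a - b) \<ge> \<delta>"
          using long_leaf[OF d gC] unfolding \<delta>_def by blast
        have mseg: "midpoint a b \<in> seg {a,b}"
          unfolding seg_def segment_convex_hull[symmetric] by (rule midpoint_in_closed_segment)
        have "0 \<le> \<delta>" using dpos by simp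
        then have "\<delta>^2 \<le> norm (a - b)^2" by (rule power_mono[OF ab(4)])
        then have "norm (midpoint a b)^2 \<le> 1 - \<delta>^2 / 4" using midpoint_close[OF ab(2,3)] by simp
        then have "norm (midpoint a b) \<le> r" unfolding r_def by (rule real_le_rsqrt)
        then have m1: "midpoint a b \<in> cball 0 r" by simp
        have m2: "midpoint a b \<in> (\<Union>l\<in>C. seg l)" using mseg ab(1) by (rule UN_I[rotated])
        have "midpoint a b \<in> T C" unfolding T_def using m2 m1 by (rule IntI)
        then show False unfolding C(2)[symmetric] by simp
      qed
    next
      fix S T' assume "S \<in> T ` K \<and> T' \<in> T ` K"
      then obtain C1 C2 where C12: "C1 \<in> K" "C2 \<in> K" "S = T C1" "T' = T C2" by blast
      have "C1 \<subseteq> C2 \<or> C2 \<subseteq> C1" using ch C12(1,2) by blast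
      then show "S \<subseteq> T' \<or> T' \<subseteq> S" unfolding C12(3,4) using Tmono by blast
    qed
    then obtain p where p: "p \<in> \<Inter>(T ` K)" by blast
    have pT: "p \<in> T C" if "C \<in> K" for C using p that by blast
    have "p \<in> cball 0 r" using pT[OF C0] unfolding T_def by (rule IntD2)
    then have pr: "norm p < 1" using r1 by simp
    have inC: "\<forall>C\<in>K. \<exists>l\<in>C. p \<in> seg l"
    proof
      fix C assume "C \<in> K"
      have "p \<in> (\<Union>l\<in>C. seg l)" using pT[OF \<open>C \<in> K\<close>] unfolding T_def by (rule IntD1)
      then show "\<exists>l\<in>C. p \<in> seg l" by (rule UN_E) blast
    qed
    obtain l where l: "l \<in> \<Inter>K" "p \<in> seg l" using common_leaf[OF lam ch C0 pr inC] by blast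
    have "is_chord l" using chords l(1) by (rule bspec)
    then obtain a b where ab: "a \<in> sphere 0 1" "b \<in> sphere 0 1" "l = {a,b}"
      unfolding is_chord_def by blast
    have "a \<noteq> b"
    proof
      assume "a = b"
      then have "l = {a}" using ab(3) by simp
      then have "p = a" using l(2) seg_single[of a] by simp
      then show False using pr ab(1) by simp
    qed
    then have "card l = 2" using ab(3) by simp
    then show ?thesis unfolding nonempty_lam_def using l(1) by (rule bexI)
  qed
  show ?thesis unfolding good_lam_def using lamM siM neM by blast
qed

theorem lemmal:
  fixes d :: nat and L :: "complex set set"
  assumes "d \<ge> 2" and "good_lam d L"
  shows "\<exists>C. is_chief d L C"
proof -
  define A where "A = uminus ` {C. C \<subseteq> L \<and> good_lam d C}"
  have "\<exists>M\<in>A. \<forall>X\<in>A. M \<subseteq> X \<longrightarrow> X = M"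
  proof (rule subset_Zorn)
    fix Ch assume chA: "subset.chain A Ch"
    then have ChA: "Ch \<subseteq> A" and chc: "\<forall>X\<in>Ch. \<forall>Y\<in>Ch. X \<subseteq> Y \<or> Y \<subseteq> X"
      unfolding subset_chain_def by blast+
    show "\<exists>U\<in>A. \<forall>X\<in>Ch. X \<subseteq> U"
    proof (cases "Ch = {}")
      case True
      have "-L \<in> A" unfolding A_def using assms by blast
      then show ?thesis using True by blast
    next
      case False
      define K where "K = uminus ` Ch"
      have Kne: "K \<noteq> {}" using False unfolding K_def by blast
      have KL: "\<forall>C\<in>K. C \<subseteq> L \<and> good_lam d C" using ChA unfolding K_def A_def by auto
      have chK: "\<forall>C1\<in>K. \<forall>C2\<in>K. C1 \<subseteq> C2 \<or> C2 \<subseteq> C1" using chc unfolding K_def by blast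
      have good: "good_lam d (\<Inter>K)" using chain_good[OF assms(1) Kne chK] KL by blast
      have "\<Inter>K \<subseteq> L" using KL Kne by blast
      then have "- \<Inter>K \<in> A" unfolding A_def using good by blast
      moreover have "\<forall>X\<in>Ch. X \<subseteq> - \<Inter>K" unfolding K_def by blast
      ultimately show ?thesis by blast
    qed
  qed
  then obtain M where M: "M \<in> A" "\<forall>X\<in>A. M \<subseteq> X \<longrightarrow> X = M" by blast
  then obtain C where C: "M = - C" "C \<subseteq> L" "good_lam d C" unfolding A_def by blast
  have "is_chief d L C" unfolding is_chief_def
  proof (intro conjI allI impI)
    show "C \<subseteq> L" "good_lam d C" using C by auto
    fix C' assume C': "C' \<subseteq> C \<and> good_lam d C'"
    then have "- C' \<in> A" unfolding A_def using C by blast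
    moreover have "M \<subseteq> - C'" using C C' by blast
    ultimately have "- C' = - C" using M C by blast
    then show "C' = C" by simp
  qed
  then show ?thesis by blast
qed

end
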